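(* Let $\Omega$ be a domain in $\mathbb C^n$ and let $f=u+iv$ be holomorphic on $\Omega$ with $u,v$ real-valued. Then for $1<p\le2$ and $\tau>0$, the function $$\frac{p}{p-1}(u^2+\tau)^{p/2}-(|f|^2+\tau)^{p/2}$$ is plurisubharmonic on $\Omega$. *)

theory Defs
  imports "HOL-Analysis.Analysis"
begin

text \<open>Points of C^n are vectors of type complex^'n, 'n a finite index type (n = CARD('n)).
  Complex scalar multiplication on complex^'n is (*s).\<close>

definition domain_cn :: "(complex ^ 'n::finite) set \<Rightarrow> bool" where
  "domain_cn \<Omega> \<longleftrightarrow> open \<Omega> \<and> connected \<Omega> \<and> \<Omega> \<noteq> {}"

definition holomorphic_on_cn :: "(complex ^ 'n::finite \<Rightarrow> complex) \<Rightarrow> (complex ^ 'n) set \<Rightarrow> bool" where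
  "holomorphic_on_cn f \<Omega> \<longleftrightarrow>
     (\<forall>z\<in>\<Omega>. \<exists>c :: complex ^ 'n. (f has_derivative (\<lambda>h. \<Sum>i\<in>UNIV. c $ i * h $ i)) (at z))"

definition usc_on :: "(complex ^ 'n::finite) set \<Rightarrow> (complex ^ 'n \<Rightarrow> real) \<Rightarrow> bool" where
  "usc_on \<Omega> \<phi> \<longleftrightarrow> (\<forall>z\<in>\<Omega>. \<forall>e>0. \<forall>\<^sub>F x in at z within \<Omega>. \<phi> x < \<phi> z + e)"

text \<open>Plurisubharmonic (real-valued): upper semicontinuous, and the restriction to every
  complex line is subharmonic, i.e. satisfies the sub-mean-value inequality on every closed
  disc {a + \<zeta> b : |\<zeta>| \<le> 1} contained in \<Omega>.\<close>
definition plurisubharmonic_on :: "(complex ^ 'n::finite) set \<Rightarrow> (complex ^ 'n \<Rightarrow> real) \<Rightarrow> bool" where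
  "plurisubharmonic_on \<Omega> \<phi> \<longleftrightarrow>
     usc_on \<Omega> \<phi> \<and>
     (\<forall>a b. (\<forall>\<zeta>. cmod \<zeta> \<le> 1 \<longrightarrow> a + \<zeta> *s b \<in> \<Omega>) \<longrightarrow>
        (\<lambda>t. \<phi> (a + cis t *s b)) integrable_on {0..2*pi} \<and>
        \<phi> a \<le> (1 / (2*pi)) * integral {0..2*pi} (\<lambda>t. \<phi> (a + cis t *s b)))"

end

theory Submission
  imports Defs "HOL-Complex_Analysis.Complex_Analysis"
begin


lemma cont_slice:
  assumes "continuous_on (A \<times> B) (\<lambda>(r,t). F r t)" "r \<in> A"
  shows "continuous_on B (F r)"
proof -
  have "continuous_on B ((\<lambda>(r,t). F r t) \<circ> (\<lambda>t. (r,t)))"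
    by (rule continuous_on_compose[OF _ continuous_on_subset[OF assms(1)]])
       (auto intro!: continuous_intros simp: assms(2))
  then show ?thesis by (simp add: o_def)
qed

lemma submean_abstract:
  fixes P Pr D Pt Ptt :: "real \<Rightarrow> real \<Rightarrow> real"
  assumes dP: "\<And>r t. r \<in> {0..1} \<Longrightarrow> t \<in> {0..2*pi} \<Longrightarrow> ((\<lambda>r. P r t) has_real_derivative Pr r t) (at r within {0..1})"
  and dN: "\<And>r t. r \<in> {0..1} \<Longrightarrow> t \<in> {0..2*pi} \<Longrightarrow> ((\<lambda>r. r * Pr r t) has_real_derivative D r t) (at r within {0..1})"
  and dT: "\<And>r t. r \<in> {0..1} \<Longrightarrow> t \<in> {0..2*pi} \<Longrightarrow> ((\<lambda>t. Pt r t) has_real_derivative Ptt r t) (at t within {0..2*pi})"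
  and per: "\<And>r. r \<in> {0..1} \<Longrightarrow> Pt r 0 = Pt r (2*pi)"
  and cP: "continuous_on ({0..1} \<times> {0..2*pi}) (\<lambda>(r,t). P r t)"
  and cPr: "continuous_on ({0..1} \<times> {0..2*pi}) (\<lambda>(r,t). Pr r t)"
  and cD: "continuous_on ({0..1} \<times> {0..2*pi}) (\<lambda>(r,t). D r t)"
  and pos: "\<And>r t. r \<in> {0<..1} \<Longrightarrow> t \<in> {0..2*pi} \<Longrightarrow> 0 \<le> r * D r t + Ptt r t"
  and P0: "\<And>t. P 0 t = P 0 0"
  shows "2*pi * P 0 0 \<le> integral {0..2*pi} (P 1)"
proof -
  define M where "M = (\<lambda>r. integral {0..2*pi} (P r))"
  define N where "N = (\<lambda>r. integral {0..2*pi} (\<lambda>t. r * Pr r t))"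
  have cbox: "cbox 0 (2*pi) = {0..2*pi::real}" by auto
  have cNf: "continuous_on ({0..1} \<times> {0..2*pi}) (\<lambda>(r,t). r * Pr r t)"
  proof -
    have "continuous_on ({0..1} \<times> {0..2*pi}) (\<lambda>x. fst x * (\<lambda>(r,t). Pr r t) x)"
      by (intro continuous_intros cPr)
    then show ?thesis by (simp add: case_prod_beta')
  qed
  have intP: "P r integrable_on {0..2*pi}" if "r \<in> {0..1}" for r
    using cont_slice[OF cP that] integrable_continuous_interval by blast
  have intPr: "Pr r integrable_on {0..2*pi}" if "r \<in> {0..1}" for r
    using cont_slice[OF cPr that] integrable_continuous_interval by blast
  have intNf: "(\<lambda>t. r * Pr r t) integrable_on {0..2*pi}" if "r \<in> {0..1}" for r
    using cont_slice[OF cNf that] integrable_continuous_interval by auto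
  have intD: "D r integrable_on {0..2*pi}" if "r \<in> {0..1}" for r
    using cont_slice[OF cD that] integrable_continuous_interval by blast
  have dM: "(M has_real_derivative integral {0..2*pi} (Pr r)) (at r within {0..1})" if "r \<in> {0..1}" for r
    unfolding M_def cbox[symmetric]
    by (rule leibniz_rule_field_derivative[OF dP]) (use that intP cPr in \<open>auto simp: cbox\<close>)
  have dN': "(N has_real_derivative integral {0..2*pi} (D r)) (at r within {0..1})" if "r \<in> {0..1}" for r
    unfolding N_def cbox[symmetric]
    by (rule leibniz_rule_field_derivative[OF dN]) (use that intNf cD in \<open>auto simp: cbox\<close>)
  have Ptt_int: "(Ptt r has_integral 0) {0..2*pi}" if "r \<in> {0..1}" for r
  proof -
    have "(Ptt r has_integral (Pt r (2*pi) - Pt r 0)) {0..2*pi}"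
      by (rule fundamental_theorem_of_calculus)
         (use dT that in \<open>auto simp: has_real_derivative_iff_has_vector_derivative\<close>)
    then show ?thesis using per[OF that] by simp
  qed
  have Dpos: "0 \<le> integral {0..2*pi} (D r)" if "r \<in> {0<..1}" for r
  proof -
    have r01: "r \<in> {0..1}" using that by auto
    have "((\<lambda>t. r * D r t + Ptt r t) has_integral (r * integral {0..2*pi} (D r) + 0)) {0..2*pi}"
      by (intro has_integral_add has_integral_mult_right integrable_integral intD r01 Ptt_int)
    then have "0 \<le> r * integral {0..2*pi} (D r) + 0"
      by (rule has_integral_nonneg) (use pos that in auto)
    then show ?thesis using that by (simp add: zero_le_mult_iff)
  qed
  have contN: "continuous_on {0..1} N"
    unfolding continuous_on_eq_continuous_within using dN' DERIV_continuous by blast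
  have contM: "continuous_on {0..1} M"
    unfolding continuous_on_eq_continuous_within using dM DERIV_continuous by blast
  have Nnonneg: "0 \<le> N r" if "r \<in> {0..1}" for r
  proof -
    have "N 0 \<le> N r"
    proof (rule DERIV_nonneg_imp_increasing_open[where f=N and a=0 and b=r])
      show "0 \<le> r" using that by auto
    next
      fix x assume x: "0 < x" "x < r"
      then have "at x within {0..1} = at x" using that by (intro at_within_Icc_at) auto
      then show "\<exists>y. DERIV N x :> y \<and> 0 \<le> y"
        using dN'[of x] Dpos[of x] x that by auto
    next
      show "continuous_on {0..r} N" using that by (intro continuous_on_subset[OF contN]) auto
    qed
    moreover have "N 0 = 0" by (simp add: N_def)
    ultimately show ?thesis by simp
  qed
  have "M 0 \<le> M 1"
  proof (rule DERIV_nonneg_imp_increasing_open[where f=M and a=0 and b=1])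
    fix x :: real assume x: "0 < x" "x < 1"
    then have "at x within {0..1} = at x" by (intro at_within_Icc_at) auto
    moreover have "0 \<le> integral {0..2*pi} (Pr x)"
    proof -
      have "N x = x * integral {0..2*pi} (Pr x)" by (simp add: N_def)
      then show ?thesis using Nnonneg[of x] x by (simp add: zero_le_mult_iff)
    qed
    ultimately show "\<exists>y. DERIV M x :> y \<and> 0 \<le> y" using dM[of x] x by auto
  qed (use contM in auto)
  moreover have "M 0 = 2*pi * P 0 0"
  proof -
    have "integral {0..2*pi} (P 0) = integral {0..2*pi} (\<lambda>t. P 0 0)"
      by (rule integral_cong) (rule P0)
    then show ?thesis by (simp add: M_def)
  qed
  ultimately show ?thesis by (simp add: M_def)
qed



definition "A1 (\<tau>::real) (p::real) (s::real) = p/2 * (s+\<tau>) powr (p/2-1)"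
definition "A2 (\<tau>::real) (p::real) (s::real) = p/2 * (p/2-1) * (s+\<tau>) powr (p/2-2)"
definition "Gf c p \<tau> (u::real) (v::real) = c*(u\<^sup>2+\<tau>) powr (p/2) - (u\<^sup>2+v\<^sup>2+\<tau>) powr (p/2)"
definition "Gu c p \<tau> (u::real) (v::real) = c*A1 \<tau> p (u\<^sup>2)*(2 * u) - A1 \<tau> p (u\<^sup>2+v\<^sup>2)*(2 * u)"
definition "Gv c p \<tau> (u::real) (v::real) = -(A1 \<tau> p (u\<^sup>2+v\<^sup>2)*(2* v))"
definition "Guu c p \<tau> (u::real) (v::real) = c*(A2 \<tau> p (u\<^sup>2)*(2 * u)*(2 * u) + A1 \<tau> p (u\<^sup>2)*2)
     - (A2 \<tau> p (u\<^sup>2+v\<^sup>2)*(2 * u)*(2 * u) + A1 \<tau> p (u\<^sup>2+v\<^sup>2)*2)"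
definition "Guv c p \<tau> (u::real) (v::real) = -(A2 \<tau> p (u\<^sup>2+v\<^sup>2)*(2* v)*(2 * u))"
definition "Gvv c p \<tau> (u::real) (v::real) = - (A2 \<tau> p (u\<^sup>2+v\<^sup>2)*(2* v)*(2* v) + A1 \<tau> p (u\<^sup>2+v\<^sup>2)*2)"

lemma dpowr:
  assumes "(f has_real_derivative f') (at x within S)" "0 < f x + \<tau>"
  shows "((\<lambda>y. (f y + \<tau>) powr q) has_real_derivative (q * (f x + \<tau>) powr (q-1) * f')) (at x within S)"
proof -
  have "((\<lambda>y. f y + \<tau>) has_real_derivative f') (at x within S)"
    using assms(1) by (auto intro!: derivative_eq_intros)
  from DERIV_chain2[OF has_real_derivative_powr[OF assms(2)] this] show ?thesis .
qed

lemma dsq: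
  assumes "(u has_real_derivative u') (at x within S)"
  shows "((\<lambda>y. (u y)\<^sup>2) has_real_derivative (2 * u x * u')) (at x within S)"
  using DERIV_mult[OF assms assms] by (simp add: power2_eq_square algebra_simps)

lemma dsum2:
  assumes "(u has_real_derivative u') (at x within S)" "(v has_real_derivative v') (at x within S)"
  shows "((\<lambda>y. (u y)\<^sup>2 + (v y)\<^sup>2) has_real_derivative (2 * u x * u' + 2 * v x * v')) (at x within S)"
  using DERIV_add[OF dsq[OF assms(1)] dsq[OF assms(2)]] by simp

lemma dA0:
  assumes "(f has_real_derivative f') (at x within S)" "0 \<le> f x" "\<tau> > 0"
  shows "((\<lambda>y. (f y + \<tau>) powr (p/2)) has_real_derivative (A1 \<tau> p (f x) * f')) (at x within S)"
  using dpowr[OF assms(1), of \<tau> "p/2"] assms by (simp add: A1_def)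

lemma dA1:
  assumes "(f has_real_derivative f') (at x within S)" "0 \<le> f x" "\<tau> > 0"
  shows "((\<lambda>y. A1 \<tau> p (f y)) has_real_derivative (A2 \<tau> p (f x) * f')) (at x within S)"
proof -
  have "((\<lambda>y. p/2 * (f y + \<tau>) powr (p/2-1)) has_real_derivative p/2 * ((p/2-1) * (f x + \<tau>) powr (p/2-1-1) * f')) (at x within S)"
    by (intro DERIV_cmult dpowr assms(1)) (use assms in auto)
  moreover have "p/2-1-1 = p/2-2" by simp
  ultimately show ?thesis by (simp add: A1_def A2_def mult.assoc)
qed

lemma dG:
  assumes du: "(u has_real_derivative u') (at x within S)" and dv: "(v has_real_derivative v') (at x within S)"
    and t: "\<tau> > 0"
  shows "((\<lambda>y. Gf c p \<tau> (u y) (v y)) has_real_derivative (Gu c p \<tau> (u x) (v x) * u' + Gv c p \<tau> (u x) (v x) * v')) (at x within S)"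
proof -
  have "((\<lambda>y. c * ((u y)\<^sup>2+\<tau>) powr (p/2) - ((u y)\<^sup>2+(v y)\<^sup>2+\<tau>) powr (p/2)) has_real_derivative
     c * (A1 \<tau> p ((u x)\<^sup>2) * (2 * u x * u')) - A1 \<tau> p ((u x)\<^sup>2+(v x)\<^sup>2) * (2 * u x * u' + 2 * v x * v')) (at x within S)"
    by (intro DERIV_diff DERIV_cmult dA0 dsq dsum2 du dv t) auto
  then show ?thesis unfolding Gf_def Gu_def Gv_def by (rule DERIV_cong) (simp add: algebra_simps)
qed

lemma dGu:
  assumes du: "(u has_real_derivative u') (at x within S)" and dv: "(v has_real_derivative v') (at x within S)"
    and t: "\<tau> > 0"
  shows "((\<lambda>y. Gu c p \<tau> (u y) (v y)) has_real_derivative (Guu c p \<tau> (u x) (v x) * u' + Guv c p \<tau> (u x) (v x) * v')) (at x within S)"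
proof -
  have a1: "((\<lambda>y. A1 \<tau> p ((u y)\<^sup>2)) has_real_derivative (A2 \<tau> p ((u x)\<^sup>2) * (2 * u x * u'))) (at x within S)"
    by (rule dA1[OF dsq[OF du]]) (use t in auto)
  have a2: "((\<lambda>y. A1 \<tau> p ((u y)\<^sup>2 + (v y)\<^sup>2)) has_real_derivative (A2 \<tau> p ((u x)\<^sup>2 + (v x)\<^sup>2) * (2 * u x * u' + 2 * v x * v'))) (at x within S)"
    by (rule dA1[OF dsum2[OF du dv]]) (use t in auto)
  have l: "((\<lambda>y. 2 * u y) has_real_derivative 2 * u') (at x within S)" using DERIV_cmult[OF du] .
  show ?thesis unfolding Gu_def
    by (rule DERIV_cong[OF DERIV_diff[OF DERIV_mult'[OF DERIV_cmult[OF a1] l] DERIV_mult'[OF a2 l]]])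
       (simp add: Guu_def Guv_def algebra_simps)
qed

lemma dGv:
  assumes du: "(u has_real_derivative u') (at x within S)" and dv: "(v has_real_derivative v') (at x within S)"
    and t: "\<tau> > 0"
  shows "((\<lambda>y. Gv c p \<tau> (u y) (v y)) has_real_derivative (Guv c p \<tau> (u x) (v x) * u' + Gvv c p \<tau> (u x) (v x) * v')) (at x within S)"
proof -
  have a2: "((\<lambda>y. A1 \<tau> p ((u y)\<^sup>2 + (v y)\<^sup>2)) has_real_derivative (A2 \<tau> p ((u x)\<^sup>2 + (v x)\<^sup>2) * (2 * u x * u' + 2 * v x * v'))) (at x within S)"
    by (rule dA1[OF dsum2[OF du dv]]) (use t in auto)
  have l: "((\<lambda>y. 2 * v y) has_real_derivative 2 * v') (at x within S)" using DERIV_cmult[OF dv] .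
  show ?thesis unfolding Gv_def
    by (rule DERIV_cong[OF DERIV_minus[OF DERIV_mult'[OF a2 l]]])
       (simp add: Gvv_def Guv_def algebra_simps)
qed

lemma lap_nonneg:
  assumes t: "\<tau> > 0" and p: "1 < p" "p \<le> 2"
  shows "0 \<le> Guu (p/(p-1)) p \<tau> u v + Gvv (p/(p-1)) p \<tau> u v"
proof -
  define X where "X = u\<^sup>2 + \<tau>"
  define Y where "Y = u\<^sup>2 + v\<^sup>2 + \<tau>"
  define c where "c = p/(p-1)"
  have X: "0 < X" "X \<le> Y" using t unfolding X_def Y_def
    by (auto intro: add_nonneg_pos)
  have c1: "1 \<le> c" using p unfolding c_def by (simp add: field_simps)
  have e1: "Y powr (p/2-1) \<le> X powr (p/2-1)" by (rule powr_mono2') (use X p in auto)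
  have e2: "Y powr (p/2-2) \<le> X powr (p/2-2)" by (rule powr_mono2') (use X p in auto)
  have rX: "X powr (p/2-1) = X * X powr (p/2-2)"
  proof -
    have "X powr (p/2-1) = X powr (1 + (p/2-2))" by simp
    also have "... = X powr 1 * X powr (p/2-2)" by (rule powr_add)
    finally show ?thesis using X by simp
  qed
  have rY: "Y powr (p/2-1) = Y * Y powr (p/2-2)"
  proof -
    have "Y powr (p/2-1) = Y powr (1 + (p/2-2))" by simp
    also have "... = Y powr 1 * Y powr (p/2-2)" by (rule powr_add)
    finally show ?thesis using X by simp
  qed
  define eX where "eX = X powr (p/2-2)"
  define eY where "eY = Y powr (p/2-2)"
  have eX0: "0 \<le> eY" unfolding eY_def by simp
  have a1x: "A1 \<tau> p (u\<^sup>2) = p/2 * X * eX" unfolding A1_def eX_def using rX by (simp add: X_def)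
  have a1y: "A1 \<tau> p (u\<^sup>2+v\<^sup>2) = p/2 * Y * eY" unfolding A1_def eY_def using rY by (simp add: Y_def add.assoc)
  have a2x: "A2 \<tau> p (u\<^sup>2) = p/2 * (p/2-1) * eX" unfolding A2_def eX_def by (simp add: X_def)
  have a2y: "A2 \<tau> p (u\<^sup>2+v\<^sup>2) = p/2 * (p/2-1) * eY" unfolding A2_def eY_def by (simp add: Y_def add.assoc)
  have E: "Guu c p \<tau> u v + Gvv c p \<tau> u v =
     c * p * eX * ((p-1)*X + (2-p)*\<tau>) - p * eY * (p*Y + (2-p)*\<tau>)"
    unfolding Guu_def Gvv_def a1x a1y a2x a2y X_def Y_def by (simp add: algebra_simps power2_eq_square)
  have cp: "c * (p-1) = p" using p unfolding c_def by simp
  have E2: "c * p * eX * ((p-1)*X + (2-p)*\<tau>) - p * eY * (p*Y + (2-p)*\<tau>)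
     = p * (p * (X * eX - Y * eY) + (2-p)*\<tau>*(c * eX - eY))"
  proof -
    have "c * p * eX * ((p-1)*X + (2-p)*\<tau>) - p * eY * (p*Y + (2-p)*\<tau>)
      = p * eX * X * (c * (p-1)) + c * p * eX * (2-p)*\<tau> - p * eY * (p*Y + (2-p)*\<tau>)"
      by (simp add: algebra_simps)
    also have "... = p * eX * X * p + c * p * eX * (2-p)*\<tau> - p * eY * (p*Y + (2-p)*\<tau>)"
      by (simp only: cp)
    also have "... = p * (p * (X * eX - Y * eY) + (2-p)*\<tau>*(c * eX - eY))"
      by (simp add: algebra_simps)
    finally show ?thesis .
  qed
  have "eY \<le> c * eX"
  proof -
    have "eY \<le> eX" using e2 unfolding eX_def eY_def .
    also have "eX \<le> c * eX" using c1 eX0 e2 unfolding eX_def eY_def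
      by (simp add: mult_le_cancel_right1)
    finally show ?thesis .
  qed
  moreover have "Y * eY \<le> X * eX" using e1 rX rY unfolding eX_def eY_def by simp
  ultimately have "0 \<le> p * (p * (X * eX - Y * eY) + (2-p)*\<tau>*(c * eX - eY))"
    using p t by (intro mult_nonneg_nonneg add_nonneg_nonneg) auto
  then show ?thesis using E E2 c_def by simp
qed



lemma re_deriv:
  fixes g :: "real \<Rightarrow> complex"
  assumes "(g has_vector_derivative g') (at a within s)"
  shows "((\<lambda>x. Re (g x)) has_real_derivative Re g') (at a within s)"
  "((\<lambda>x. Im (g x)) has_real_derivative Im g') (at a within s)"
  using bounded_linear.has_vector_derivative[OF bounded_linear_Re assms]
    bounded_linear.has_vector_derivative[OF bounded_linear_Im assms]
  by (simp_all add: has_real_derivative_iff_has_vector_derivative)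

lemma ray_deriv:
  assumes "(g has_field_derivative g') (at (of_real r * e))"
  shows "((\<lambda>r. g (of_real r * e)) has_vector_derivative (e * g')) (at r within S)"
proof -
  have "((\<lambda>w. g (w * e)) has_field_derivative g' * e) (at (of_real r))"
  proof -
    have "((\<lambda>w. w * e) has_field_derivative e) (at (of_real r))"
      by (auto intro!: derivative_eq_intros)
    from DERIV_chain2[OF assms this] show ?thesis .
  qed
  from has_vector_derivative_real_field[OF this] show ?thesis by (simp add: mult.commute)
qed

lemma circ_deriv:
  assumes "(g has_field_derivative g') (at (of_real r * cis t))"
  shows "((\<lambda>t. g (of_real r * cis t)) has_vector_derivative (\<i> * (of_real r * cis t) * g')) (at t within S)"
proof -
  have d: "((\<lambda>w. of_real r * exp (\<i> * w)) has_field_derivative (of_real r * (exp (\<i> * of_real t) * \<i>))) (at (of_real t))"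
    by (auto intro!: derivative_eq_intros)
  have "((\<lambda>w. g (of_real r * exp (\<i> * w))) has_field_derivative g' * (of_real r * (exp (\<i> * of_real t) * \<i>))) (at (of_real t))"
    using DERIV_chain2[OF _ d, of g g'] assms by (simp add: cis_conv_exp)
  from has_vector_derivative_real_field[OF this, of S] show ?thesis
    by (simp add: cis_conv_exp[symmetric] algebra_simps)
qed


lemma cont_G:
  assumes "continuous_on S f" "continuous_on S g" "\<tau> > 0"
  shows "continuous_on S (\<lambda>x. Gf c p \<tau> (f x) (g x))" "continuous_on S (\<lambda>x. Gu c p \<tau> (f x) (g x))"
    "continuous_on S (\<lambda>x. Gv c p \<tau> (f x) (g x))" "continuous_on S (\<lambda>x. Guu c p \<tau> (f x) (g x))"
    "continuous_on S (\<lambda>x. Guv c p \<tau> (f x) (g x))" "continuous_on S (\<lambda>x. Gvv c p \<tau> (f x) (g x))"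
proof -
  have nz: "\<And>y::real. y\<^sup>2 + \<tau> \<noteq> 0" "\<And>y z::real. y\<^sup>2 + z\<^sup>2 + \<tau> \<noteq> 0"
    using assms(3) by (smt (verit) zero_le_power2)+
  show "continuous_on S (\<lambda>x. Gf c p \<tau> (f x) (g x))" unfolding Gf_def
    by (intro continuous_intros assms) (auto simp: nz)
  show "continuous_on S (\<lambda>x. Gu c p \<tau> (f x) (g x))" unfolding Gu_def A1_def
    by (intro continuous_intros assms) (auto simp: nz)
  show "continuous_on S (\<lambda>x. Gv c p \<tau> (f x) (g x))" unfolding Gv_def A1_def
    by (intro continuous_intros assms) (auto simp: nz)
  show "continuous_on S (\<lambda>x. Guu c p \<tau> (f x) (g x))" unfolding Guu_def A1_def A2_def
    by (intro continuous_intros assms) (auto simp: nz)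
  show "continuous_on S (\<lambda>x. Guv c p \<tau> (f x) (g x))" unfolding Guv_def A2_def
    by (intro continuous_intros assms) (auto simp: nz)
  show "continuous_on S (\<lambda>x. Gvv c p \<tau> (f x) (g x))" unfolding Gvv_def A1_def A2_def
    by (intro continuous_intros assms) (auto simp: nz)
qed

lemma onevar:
  fixes h :: "complex \<Rightarrow> complex"
  assumes hol: "h holomorphic_on V" and V: "open V" "cball 0 1 \<subseteq> V"
    and t: "\<tau> > 0" and p: "1 < p" "p \<le> 2"
  shows "2*pi * Gf (p/(p-1)) p \<tau> (Re (h 0)) (Im (h 0))
     \<le> integral {0..2*pi} (\<lambda>t. Gf (p/(p-1)) p \<tau> (Re (h (cis t))) (Im (h (cis t))))"
proof -
  define c where "c = p/(p-1)"
  define h1 where "h1 = deriv h"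
  define h2 where "h2 = deriv h1"
  have hol1: "h1 holomorphic_on V" unfolding h1_def using hol V by (intro holomorphic_deriv)
  have hol2: "h2 holomorphic_on V" unfolding h2_def using hol1 V by (intro holomorphic_deriv)
  have dh: "(h has_field_derivative h1 z) (at z)" if "z \<in> V" for z
    using holomorphic_derivI[OF hol V(1) that, of UNIV] unfolding h1_def by simp
  have dh1: "(h1 has_field_derivative h2 z) (at z)" if "z \<in> V" for z
    using holomorphic_derivI[OF hol1 V(1) that, of UNIV] unfolding h2_def by simp
  have ch: "continuous_on V h" "continuous_on V h1" "continuous_on V h2"
    using hol hol1 hol2 by (auto intro: holomorphic_on_imp_continuous_on)
  define Z where "Z = (\<lambda>r t. complex_of_real r * cis t)"
  have inV: "Z r t \<in> V" if "r \<in> {0..1}" for r t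
    using V(2) that by (auto simp: Z_def norm_mult)
  define K where "K = {0..1::real} \<times> {0..2*pi::real}"
  have cZ: "continuous_on K (\<lambda>x. g (Z (fst x) (snd x)))" if "continuous_on V g" for g
  proof (rule continuous_on_compose2[OF that])
    show "continuous_on K (\<lambda>x. Z (fst x) (snd x))" unfolding Z_def by (intro continuous_intros)
    show "(\<lambda>x. Z (fst x) (snd x)) ` K \<subseteq> V" using inV by (auto simp: K_def)
  qed
  define U where "U = (\<lambda>r t. Re (h (Z r t)))"
  define W where "W = (\<lambda>r t. Im (h (Z r t)))"
  define w1 where "w1 = (\<lambda>r t. cis t * h1 (Z r t))"
  define w2 where "w2 = (\<lambda>r t. cis t * (cis t * h2 (Z r t)))"
  define q1 where "q1 = (\<lambda>r t. \<i> * Z r t * h1 (Z r t))"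
  define q2 where "q2 = (\<lambda>r t. \<i> * Z r t * (\<i> * h1 (Z r t) + \<i> * Z r t * h2 (Z r t)))"
  define P where "P = (\<lambda>r t. Gf c p \<tau> (U r t) (W r t))"
  define Pr where "Pr = (\<lambda>r t. Gu c p \<tau> (U r t) (W r t) * Re (w1 r t) + Gv c p \<tau> (U r t) (W r t) * Im (w1 r t))"
  define Q where "Q = (\<lambda>r t. (Guu c p \<tau> (U r t) (W r t) * Re (w1 r t) + Guv c p \<tau> (U r t) (W r t) * Im (w1 r t)) * Re (w1 r t)
      + Gu c p \<tau> (U r t) (W r t) * Re (w2 r t)
      + ((Guv c p \<tau> (U r t) (W r t) * Re (w1 r t) + Gvv c p \<tau> (U r t) (W r t) * Im (w1 r t)) * Im (w1 r t)
      + Gv c p \<tau> (U r t) (W r t) * Im (w2 r t)))"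
  define D where "D = (\<lambda>r t. Pr r t + r * Q r t)"
  define Pt where "Pt = (\<lambda>r t. Gu c p \<tau> (U r t) (W r t) * Re (q1 r t) + Gv c p \<tau> (U r t) (W r t) * Im (q1 r t))"
  define Ptt where "Ptt = (\<lambda>r t. (Guu c p \<tau> (U r t) (W r t) * Re (q1 r t) + Guv c p \<tau> (U r t) (W r t) * Im (q1 r t)) * Re (q1 r t)
      + Gu c p \<tau> (U r t) (W r t) * Re (q2 r t)
      + ((Guv c p \<tau> (U r t) (W r t) * Re (q1 r t) + Gvv c p \<tau> (U r t) (W r t) * Im (q1 r t)) * Im (q1 r t)
      + Gv c p \<tau> (U r t) (W r t) * Im (q2 r t)))"
  have dhr: "((\<lambda>r. h (Z r t)) has_vector_derivative w1 r t) (at r within S)" if "r \<in> {0..1}" for r t S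
    unfolding Z_def w1_def by (rule ray_deriv) (use dh inV[OF that] in \<open>simp add: Z_def\<close>)
  have dw1: "((\<lambda>r. w1 r t) has_vector_derivative w2 r t) (at r within S)" if "r \<in> {0..1}" for r t S
  proof -
    have "((\<lambda>w. cis t * h1 w) has_field_derivative cis t * h2 (Z r t)) (at (Z r t))"
      by (rule DERIV_cmult[OF dh1[OF inV[OF that]]])
    from ray_deriv[OF this[unfolded Z_def]] show ?thesis unfolding w1_def w2_def Z_def .
  qed
  have dht: "((\<lambda>t. h (Z r t)) has_vector_derivative q1 r t) (at t within S)" if "r \<in> {0..1}" for r t S
    unfolding Z_def q1_def by (rule circ_deriv) (use dh inV[OF that] in \<open>simp add: Z_def\<close>)
  have dq1: "((\<lambda>t. q1 r t) has_vector_derivative q2 r t) (at t within S)" if "r \<in> {0..1}" for r t S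
  proof -
    have "((\<lambda>w. \<i> * w * h1 w) has_field_derivative (\<i> * h1 (Z r t) + \<i> * Z r t * h2 (Z r t))) (at (Z r t))"
      by (rule DERIV_cong[OF DERIV_mult'[OF DERIV_cmult[OF DERIV_ident] dh1[OF inV[OF that]]]]) simp
    from circ_deriv[OF this[unfolded Z_def]] show ?thesis unfolding q1_def q2_def Z_def .
  qed
  have dU: "((\<lambda>r. U r t) has_real_derivative Re (w1 r t)) (at r within S)"
           "((\<lambda>r. W r t) has_real_derivative Im (w1 r t)) (at r within S)"
           "((\<lambda>r. Re (w1 r t)) has_real_derivative Re (w2 r t)) (at r within S)"
           "((\<lambda>r. Im (w1 r t)) has_real_derivative Im (w2 r t)) (at r within S)"
           "((\<lambda>t. U r t) has_real_derivative Re (q1 r t)) (at t within S)"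
           "((\<lambda>t. W r t) has_real_derivative Im (q1 r t)) (at t within S)"
           "((\<lambda>t. Re (q1 r t)) has_real_derivative Re (q2 r t)) (at t within S)"
           "((\<lambda>t. Im (q1 r t)) has_real_derivative Im (q2 r t)) (at t within S)"
    if "r \<in> {0..1}" for r t S
    unfolding U_def W_def
    using re_deriv[OF dhr[OF that]] re_deriv[OF dw1[OF that]] re_deriv[OF dht[OF that]] re_deriv[OF dq1[OF that]]
    by auto
  have dP: "((\<lambda>r. P r t) has_real_derivative Pr r t) (at r within {0..1})" if "r \<in> {0..1}" for r t
    unfolding P_def Pr_def by (rule dG[OF dU(1,2)[OF that] t])
  have dPr: "((\<lambda>r. Pr r t) has_real_derivative Q r t) (at r within {0..1})" if "r \<in> {0..1}" for r t
    unfolding Pr_def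
    by (rule DERIV_cong[OF DERIV_add[OF DERIV_mult'[OF dGu[OF dU(1,2)[OF that] t] dU(3)[OF that]]
                                     DERIV_mult'[OF dGv[OF dU(1,2)[OF that] t] dU(4)[OF that]]]])
       (simp add: Q_def algebra_simps)
  have dN: "((\<lambda>r. r * Pr r t) has_real_derivative D r t) (at r within {0..1})" if "r \<in> {0..1}" for r t
    by (rule DERIV_cong[OF DERIV_mult'[OF DERIV_ident dPr[OF that]]]) (simp add: D_def)
  have dT: "((\<lambda>t. Pt r t) has_real_derivative Ptt r t) (at t within {0..2*pi})" if "r \<in> {0..1}" for r t
    unfolding Pt_def
    by (rule DERIV_cong[OF DERIV_add[OF DERIV_mult'[OF dGu[OF dU(5,6)[OF that] t] dU(7)[OF that]]
                                     DERIV_mult'[OF dGv[OF dU(5,6)[OF that] t] dU(8)[OF that]]]])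
       (simp add: Ptt_def algebra_simps)
  have per: "Pt r 0 = Pt r (2*pi)" for r
    by (simp add: Pt_def U_def W_def q1_def Z_def)
  have P0: "P 0 t = P 0 0" for t
    by (simp add: P_def U_def W_def Z_def)
  have pos: "0 \<le> r * D r t + Ptt r t" if "r \<in> {0<..1}" for r t
  proof -
    have e1: "q1 r t = \<i> * of_real r * w1 r t" by (simp add: q1_def w1_def Z_def algebra_simps)
    have e2: "q2 r t = - (of_real r * w1 r t) - (of_real r)\<^sup>2 * w2 r t"
      by (simp add: q2_def w1_def w2_def Z_def algebra_simps power2_eq_square)
    have r1: "Re (q1 r t) = - r * Im (w1 r t)" "Im (q1 r t) = r * Re (w1 r t)"
      unfolding e1 by simp_all
    have r2: "Re (q2 r t) = - r * Re (w1 r t) - r\<^sup>2 * Re (w2 r t)" "Im (q2 r t) = - r * Im (w1 r t) - r\<^sup>2 * Im (w2 r t)"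
      unfolding e2 by (simp_all add: power2_eq_square)
    have "r * D r t + Ptt r t = r\<^sup>2 * ((Re (w1 r t))\<^sup>2 + (Im (w1 r t))\<^sup>2) *
       (Guu c p \<tau> (U r t) (W r t) + Gvv c p \<tau> (U r t) (W r t))"
      unfolding D_def Ptt_def Pr_def Q_def r1 r2 by (simp add: algebra_simps power2_eq_square)
    moreover have "0 \<le> Guu c p \<tau> (U r t) (W r t) + Gvv c p \<tau> (U r t) (W r t)"
      unfolding c_def by (rule lap_nonneg[OF t p])
    ultimately show ?thesis by simp
  qed
  have cU: "continuous_on K (\<lambda>x. U (fst x) (snd x))" "continuous_on K (\<lambda>x. W (fst x) (snd x))"
    "continuous_on K (\<lambda>x. Re (w1 (fst x) (snd x)))" "continuous_on K (\<lambda>x. Im (w1 (fst x) (snd x)))"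
    "continuous_on K (\<lambda>x. Re (w2 (fst x) (snd x)))" "continuous_on K (\<lambda>x. Im (w2 (fst x) (snd x)))"
    unfolding U_def W_def w1_def w2_def
    by (intro continuous_intros cZ ch)+
  have cP: "continuous_on K (\<lambda>(r,t). P r t)"
    unfolding case_prod_beta' P_def by (intro cont_G cU t)
  have cPr: "continuous_on K (\<lambda>(r,t). Pr r t)"
    unfolding case_prod_beta' Pr_def by (intro continuous_intros cont_G cU t)
  have cQ: "continuous_on K (\<lambda>x. Q (fst x) (snd x))"
    unfolding Q_def
    by (intro continuous_on_add continuous_on_mult cont_G cU t)
  have cD: "continuous_on K (\<lambda>(r,t). D r t)"
    unfolding case_prod_beta' D_def
    by (intro continuous_on_add continuous_on_mult cQ cPr[unfolded case_prod_beta'] continuous_on_fst continuous_on_id)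
  have "2*pi * P 0 0 \<le> integral {0..2*pi} (P 1)"
    by (rule submean_abstract[OF dP dN dT per cP[unfolded K_def] cPr[unfolded K_def] cD[unfolded K_def] pos P0])
  then show ?thesis by (simp add: P_def U_def W_def Z_def c_def)
qed



theorem lemma2p1:
  fixes \<Omega> :: "(complex ^ 'n::finite) set"
    and f :: "complex ^ 'n \<Rightarrow> complex"
    and p \<tau> :: real
  assumes "domain_cn \<Omega>"
    and "holomorphic_on_cn f \<Omega>"
    and "1 < p" and "p \<le> 2" and "\<tau> > 0"
  shows "plurisubharmonic_on \<Omega>
           (\<lambda>z. p / (p - 1) * ((Re (f z))\<^sup>2 + \<tau>) powr (p / 2)
                 - ((cmod (f z))\<^sup>2 + \<tau>) powr (p / 2))"
proof -
  define c where "c = p / (p - 1)"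
  define \<phi> where "\<phi> = (\<lambda>z. p / (p - 1) * ((Re (f z))\<^sup>2 + \<tau>) powr (p / 2)
                 - ((cmod (f z))\<^sup>2 + \<tau>) powr (p / 2))"
  have phiG: "\<phi> z = Gf c p \<tau> (Re (f z)) (Im (f z))" for z
    by (simp add: \<phi>_def Gf_def c_def cmod_power2)
  have opn: "open \<Omega>" using assms(1) by (simp add: domain_cn_def)
  obtain L where L: "\<And>z. z \<in> \<Omega> \<Longrightarrow> (f has_derivative (\<lambda>h. \<Sum>i\<in>UNIV. L z $ i * h $ i)) (at z)"
    using assms(2) unfolding holomorphic_on_cn_def by metis
  have fcont: "continuous (at z) f" if "z \<in> \<Omega>" for z
    using has_derivative_continuous[OF L[OF that]] .
  have fcon: "continuous_on \<Omega> f"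
    using fcont by (simp add: continuous_at_imp_continuous_on)
  have phicon: "continuous_on \<Omega> \<phi>"
    unfolding phiG by (intro cont_G continuous_intros fcon assms(5))
  have usc: "usc_on \<Omega> \<phi>"
    unfolding usc_on_def
  proof (intro ballI allI impI)
    fix z e assume z: "z \<in> \<Omega>" and e: "(0::real) < e"
    have "(\<phi> \<longlongrightarrow> \<phi> z) (at z within \<Omega>)"
      using phicon z by (simp add: continuous_on_def)
    moreover have "\<phi> z < \<phi> z + e" using e by simp
    ultimately show "\<forall>\<^sub>F x in at z within \<Omega>. \<phi> x < \<phi> z + e"
      by (rule order_tendstoD(2))
  qed
  have disc: "(\<lambda>t. \<phi> (a + cis t *s b)) integrable_on {0..2*pi} \<and>
        \<phi> a \<le> (1 / (2*pi)) * integral {0..2*pi} (\<lambda>t. \<phi> (a + cis t *s b))"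
    if ab: "\<forall>\<zeta>. cmod \<zeta> \<le> 1 \<longrightarrow> a + \<zeta> *s b \<in> \<Omega>" for a b
  proof -
    define V where "V = {\<zeta>. a + \<zeta> *s b \<in> \<Omega>}"
    define h where "h = (\<lambda>\<zeta>. f (a + \<zeta> *s b))"
    have lin: "bounded_linear (\<lambda>k::complex. k *s b)"
    proof -
      have "linear (\<lambda>k::complex. k *s b)"
        by (rule linearI) (simp_all add: vec_eq_iff vector_sadd_rdistrib)
      then show ?thesis using linear_conv_bounded_linear by blast
    qed
    have dA: "((\<lambda>\<zeta>. a + \<zeta> *s b) has_derivative (\<lambda>k. k *s b)) (at \<zeta>)" for \<zeta>
      using has_derivative_add[OF has_derivative_const bounded_linear_imp_has_derivative[OF lin], of a "at \<zeta>"]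
      by simp
    have Vopen: "open V"
    proof -
      have "V = (\<lambda>\<zeta>. a + \<zeta> *s b) -` \<Omega>" by (auto simp: V_def)
      moreover have "continuous (at \<zeta>) (\<lambda>\<zeta>. a + \<zeta> *s b)" for \<zeta>
        using has_derivative_continuous[OF dA] .
      ultimately show ?thesis using continuous_open_vimage[OF opn] by metis
    qed
    have Vdisc: "cball 0 1 \<subseteq> V" using ab by (auto simp: V_def)
    have hol: "h holomorphic_on V"
      unfolding holomorphic_on_def field_differentiable_def
    proof
      fix \<zeta> assume "\<zeta> \<in> V"
      then have z: "a + \<zeta> *s b \<in> \<Omega>" by (simp add: V_def)
      have "(h has_derivative (\<lambda>k. (\<Sum>i\<in>UNIV. L (a + \<zeta> *s b) $ i * (k *s b) $ i))) (at \<zeta>)"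
        unfolding h_def using has_derivative_compose[OF dA L[OF z]] by (simp add: o_def)
      moreover have "(\<lambda>k. (\<Sum>i\<in>UNIV. L (a + \<zeta> *s b) $ i * (k *s b) $ i))
          = (*) (\<Sum>i\<in>UNIV. L (a + \<zeta> *s b) $ i * b $ i)"
        by (auto simp: sum_distrib_left algebra_simps)
      ultimately have "(h has_field_derivative (\<Sum>i\<in>UNIV. L (a + \<zeta> *s b) $ i * b $ i)) (at \<zeta>)"
        by (simp add: has_field_derivative_def)
      then show "\<exists>f'. (h has_field_derivative f') (at \<zeta> within V)"
        by (blast intro: has_field_derivative_at_within)
    qed
    have main: "2*pi * Gf c p \<tau> (Re (h 0)) (Im (h 0))
       \<le> integral {0..2*pi} (\<lambda>t. Gf c p \<tau> (Re (h (cis t))) (Im (h (cis t))))"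
      unfolding c_def by (rule onevar[OF hol Vopen Vdisc assms(5,3,4)])
    have eqf: "(\<lambda>t. \<phi> (a + cis t *s b)) = (\<lambda>t. Gf c p \<tau> (Re (h (cis t))) (Im (h (cis t))))"
      by (simp add: phiG h_def)
    have h0: "\<phi> a = Gf c p \<tau> (Re (h 0)) (Im (h 0))" by (simp add: phiG h_def)
    have hcon: "continuous_on {0..2*pi} (\<lambda>t. h (cis t))"
    proof (rule continuous_on_compose2[OF holomorphic_on_imp_continuous_on[OF hol]])
      show "continuous_on {0..2*pi} cis" by (intro continuous_intros)
      show "cis ` {0..2*pi} \<subseteq> V" using Vdisc by auto
    qed
    have int: "(\<lambda>t. \<phi> (a + cis t *s b)) integrable_on {0..2*pi}"
      unfolding eqf by (intro integrable_continuous_interval cont_G continuous_intros hcon assms(5))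
    show ?thesis
      using int main unfolding eqf h0 by (simp add: field_simps)
  qed
  show ?thesis
    unfolding plurisubharmonic_on_def \<phi>_def[symmetric] using usc disc by blast
qed

end
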